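(* Let $L\in\mathbb{R}^{m\times m}$ satisfy $\|\mathrm{e}^{\omega L}\|_\infty\le 1$ for all $\omega>0$. Let $\rho>0$ and let $f:[-\rho,\rho]\to\mathbb{R}$ (acting componentwise on vectors) satisfy (F+) there exists $\omega_0^+>0$ such that $|\xi+\omega f(\xi)|\le\rho$ for all $\xi\in[-\rho,\rho]$ and all $\omega\in(0,\omega_0^+]$; (F$-$) there exists $\omega_0^->0$ such that $|\xi-\omega f(\xi)|\le\rho$ for all $\xi\in[-\rho,\rho]$ and all $\omega\in(0,\omega_0^-]$. Consider the $s$-stage IFRK step $$u^{(0)}=u^n,\qquad u^{(i)}=\sum_{j=0}^{i-1}\mathrm{e}^{(c_i-c_j)\tau L}\big[\alpha_{ij}u^{(j)}+\tau\beta_{ij}f(u^{(j)})\big],\ 1\le i\le s,\qquad u^{n+1}=u^{(s)},$$ where the coefficients satisfy $\alpha_{ij}\ge 0$, $\sum_{j=0}^{i-1}\alpha_{ij}=1$ for each $i$, $\beta_{ij}=0$ whenever $\alpha_{ij}=0$, and the abscissas are non-decreasing: $c_0\le c_1\le\cdots\le c_s$. Suppose $\|u^n\|_\infty\le\rho$. If all $\beta_{ij}\ge 0$ and $$\tau\le \mathcal{C}\,\omega_0^+,\qquad \mathcal{C}=\min_{(i,j):\,\beta_{ij}>0}\frac{\alpha_{ij}}{\beta_{ij}},$$ or if some $\beta_{ij}<0$ and $$\tau\le \mathcal{C}\,\min\{\omega_0^+,\omega_0^-\},\qquad \mathcal{C}=\min_{(i,j):\,\beta_{ij}\neq 0}\frac{\alpha_{ij}}{|\beta_{ij}|},$$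 then $\|u^{(i)}\|_\infty\le\rho$ for all $i$, and in particular $\|u^{n+1}\|_\infty\le\rho$.
   Context: $\|\cdot\|_\infty$ denotes the vector $\infty$-norm on $\mathbb{R}^m$ and the induced matrix norm. For $u\in\mathbb{R}^m$, $f(u)$ denotes the vector with components $f(u_j)$. $\tau>0$ is the time step size. This step discretizes the ODE system $\frac{du}{dt}=Lu+f(u)$. *)

theory Defs
  imports "HOL-Analysis.Analysis"
begin

definition mat_pow :: "real^'m^'m \<Rightarrow> nat \<Rightarrow> real^'m^'m" where
  "mat_pow A k = ((\<lambda>B. A ** B) ^^ k) (mat 1)"

definition mat_exp :: "real^'m^'m \<Rightarrow> real^'m^'m" where
  "mat_exp A = (\<Sum>k. (1 / fact k) *\<^sub>R mat_pow A k)"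

definition vnorm_inf :: "real^'m \<Rightarrow> real" where
  "vnorm_inf x = Max (range (\<lambda>i. \<bar>x $ i\<bar>))"

definition mnorm_inf :: "real^'m^'m \<Rightarrow> real" where
  "mnorm_inf A = Sup ((\<lambda>x. vnorm_inf (A *v x)) ` {x. vnorm_inf x \<le> 1})"

definition fvec :: "(real \<Rightarrow> real) \<Rightarrow> real^'m \<Rightarrow> real^'m" where
  "fvec f u = (\<chi> k. f (u $ k))"

end

theory Submission
  imports Defs
begin
lemma vnorm_le_iff: "vnorm_inf (x::real^'m) \<le> r \<longleftrightarrow> (\<forall>i. \<bar>x$i\<bar> \<le> r)"
  unfolding vnorm_inf_def by (subst Max_le_iff) auto

lemma mat_exp_zero: "mat_exp (0::real^'m^'m) = mat 1"
proof -
  have pw: "mat_pow 0 k = (if k = 0 then mat 1 else (0::real^'m^'m))" for k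
    by (cases k) (auto simp: mat_pow_def)
  have "(\<lambda>k. (1 / fact k) *\<^sub>R mat_pow (0::real^'m^'m) k) = (\<lambda>k. if k = 0 then mat 1 else 0)"
    by (auto simp: pw)
  moreover have "(\<lambda>k::nat. if k = 0 then mat 1 else (0::real^'m^'m)) sums mat 1"
    using sums_single[of 0 "\<lambda>_. mat 1 :: real^'m^'m"] by simp
  ultimately show ?thesis unfolding mat_exp_def by (simp add: sums_iff)
qed

lemma bdd: "bdd_above ((\<lambda>x. vnorm_inf ((A::real^'m^'m) *v x)) ` {x. vnorm_inf x \<le> 1})"
proof -
  have "linear ((*v) A)" by (rule matrix_vector_mul_linear)
  then obtain B where B: "\<And>x. norm (A *v x) \<le> B * norm x"
    using linear_bounded by blast
  have "vnorm_inf (A *v x) \<le> real CARD('m) * \<bar>B\<bar>" if "vnorm_inf x \<le> 1" for x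
  proof -
    have "norm x \<le> (\<Sum>i\<in>UNIV. \<bar>x$i\<bar>)" by (rule norm_le_l1_cart)
    also have "\<dots> \<le> (\<Sum>i\<in>(UNIV::'m set). 1)" 
      using that by (intro sum_mono) (simp add: vnorm_le_iff)
    finally have nx: "norm x \<le> real CARD('m)" by simp
    have "norm (A *v x) \<le> norm x * \<bar>B\<bar>" using B[of x] mult.commute
      by (smt (verit) mult_left_mono norm_ge_zero abs_ge_self)
    also have "\<dots> \<le> real CARD('m) * \<bar>B\<bar>" using nx by (simp add: mult_right_mono)
    finally have h: "norm (A *v x) \<le> real CARD('m) * \<bar>B\<bar>" .
    show ?thesis unfolding vnorm_le_iff
      using h component_le_norm_cart[of "A *v x"] by (meson order_trans)
  qed
  then show ?thesis by (auto simp: bdd_above_def)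
qed

lemma contr:
  assumes "mnorm_inf (A::real^'m^'m) \<le> 1" "vnorm_inf x \<le> r" "r > 0"
  shows "vnorm_inf (A *v x) \<le> r"
proof -
  have "vnorm_inf ((1/r) *\<^sub>R x) \<le> 1" using assms(2,3)
    by (auto simp: vnorm_le_iff abs_mult field_simps)
  then have "vnorm_inf (A *v ((1/r) *\<^sub>R x)) \<le> mnorm_inf A"
    unfolding mnorm_inf_def by (intro cSup_upper bdd) auto
  then have "vnorm_inf ((1/r) *\<^sub>R (A *v x)) \<le> 1" using assms(1)
    by (simp add: matrix_vector_mult_scaleR)
  then show ?thesis using assms(3) by (auto simp: vnorm_le_iff abs_mult field_simps)
qed

theorem theorem3p1:
  fixes L :: "real^'m^'m" and f :: "real \<Rightarrow> real"
    and \<rho> \<tau> \<omega>p \<omega>m :: real and s :: nat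
    and \<alpha> \<beta> :: "nat \<Rightarrow> nat \<Rightarrow> real" and c :: "nat \<Rightarrow> real"
    and u :: "nat \<Rightarrow> real^'m"
  assumes L_contr: "\<And>\<omega>. \<omega> > 0 \<Longrightarrow> mnorm_inf (mat_exp (\<omega> *\<^sub>R L)) \<le> 1"
    and rho_pos: "\<rho> > 0"
    and tau_pos: "\<tau> > 0"
    and Fplus: "\<omega>p > 0"
        "\<And>\<xi> \<omega>. \<bar>\<xi>\<bar> \<le> \<rho> \<Longrightarrow> 0 < \<omega> \<Longrightarrow> \<omega> \<le> \<omega>p \<Longrightarrow> \<bar>\<xi> + \<omega> * f \<xi>\<bar> \<le> \<rho>"
    and Fminus: "\<omega>m > 0"
        "\<And>\<xi> \<omega>. \<bar>\<xi>\<bar> \<le> \<rho> \<Longrightarrow> 0 < \<omega> \<Longrightarrow> \<omega> \<le> \<omega>m \<Longrightarrow> \<bar>\<xi> - \<omega> * f \<xi>\<bar> \<le> \<rho>"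
    and alpha_nonneg: "\<And>i j. 1 \<le> i \<Longrightarrow> i \<le> s \<Longrightarrow> j < i \<Longrightarrow> \<alpha> i j \<ge> 0"
    and alpha_sum: "\<And>i. 1 \<le> i \<Longrightarrow> i \<le> s \<Longrightarrow> (\<Sum>j<i. \<alpha> i j) = 1"
    and beta_zero: "\<And>i j. 1 \<le> i \<Longrightarrow> i \<le> s \<Longrightarrow> j < i \<Longrightarrow> \<alpha> i j = 0 \<Longrightarrow> \<beta> i j = 0"
    and c_mono: "\<And>i. i < s \<Longrightarrow> c i \<le> c (Suc i)"
    and u0: "vnorm_inf (u 0) \<le> \<rho>"
    and stages: "\<And>i. 1 \<le> i \<Longrightarrow> i \<le> s \<Longrightarrow>
        u i = (\<Sum>j<i. mat_exp (((c i - c j) * \<tau>) *\<^sub>R L)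
                 *v (\<alpha> i j *\<^sub>R u j + (\<tau> * \<beta> i j) *\<^sub>R fvec f (u j)))"
    and step_restr:
      "((\<forall>i j. 1 \<le> i \<and> i \<le> s \<and> j < i \<longrightarrow> \<beta> i j \<ge> 0) \<and>
          (\<forall>i j. 1 \<le> i \<and> i \<le> s \<and> j < i \<and> \<beta> i j > 0 \<longrightarrow> \<tau> \<le> (\<alpha> i j / \<beta> i j) * \<omega>p))
       \<or> ((\<exists>i j. 1 \<le> i \<and> i \<le> s \<and> j < i \<and> \<beta> i j < 0) \<and>
          (\<forall>i j. 1 \<le> i \<and> i \<le> s \<and> j < i \<and> \<beta> i j \<noteq> 0 \<longrightarrow>
              \<tau> \<le> (\<alpha> i j / \<bar>\<beta> i j\<bar>) * min \<omega>p \<omega>m))"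
  shows "\<forall>i\<le>s. vnorm_inf (u i) \<le> \<rho>"
  proof -
  have key: "\<forall>k. \<bar>u i $ k\<bar> \<le> \<rho>" if "i \<le> s" for i
    using that
  proof (induction i rule: less_induct)
    case (less i)
    show ?case
    proof (cases "i = 0")
      case True then show ?thesis using u0 by (simp add: vnorm_le_iff)
    next
      case False
      then have i1: "1 \<le> i" by simp
      have comp: "\<bar>(mat_exp (((c i - c j) * \<tau>) *\<^sub>R L)
                 *v (\<alpha> i j *\<^sub>R u j + (\<tau> * \<beta> i j) *\<^sub>R fvec f (u j))) $ k\<bar> \<le> \<alpha> i j * \<rho>"
        if j: "j < i" for j k
      proof -
        have IH: "\<forall>k. \<bar>u j $ k\<bar> \<le> \<rho>" using less.IH[of j] j less.prems by simp
        have a0: "\<alpha> i j \<ge> 0" using alpha_nonneg[OF i1 less.prems j] .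
        define w where "w = \<alpha> i j *\<^sub>R u j + (\<tau> * \<beta> i j) *\<^sub>R fvec f (u j)"
        have wk: "\<bar>w $ k\<bar> \<le> \<alpha> i j * \<rho>" for k
        proof (cases "\<alpha> i j = 0")
          case True
          then have "\<beta> i j = 0" using beta_zero[OF i1 less.prems j] by simp
          then show ?thesis using True by (simp add: w_def)
        next
          case False
          then have ap: "\<alpha> i j > 0" using a0 by simp
          define \<xi> where "\<xi> = u j $ k"
          have xi: "\<bar>\<xi>\<bar> \<le> \<rho>" using IH \<xi>_def by simp
          have wexp: "w $ k = \<alpha> i j * (\<xi> + (\<tau> * \<beta> i j / \<alpha> i j) * f \<xi>)"
            using ap by (simp add: w_def \<xi>_def fvec_def field_simps)
          have "\<bar>\<xi> + (\<tau> * \<beta> i j / \<alpha> i j) * f \<xi>\<bar> \<le> \<rho>"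
          proof -
            have hs: "i \<le> s" using less.prems .
            have G2: "\<forall>i j. 1 \<le> i \<and> i \<le> s \<and> j < i \<and> \<beta> i j \<noteq> 0 \<longrightarrow>
              \<tau> \<le> (\<alpha> i j / \<bar>\<beta> i j\<bar>) * min \<omega>p \<omega>m"
              if nall: "\<not> (\<forall>i j. 1 \<le> i \<and> i \<le> s \<and> j < i \<longrightarrow> \<beta> i j \<ge> 0)"
              using step_restr
            proof (elim disjE)
              assume "(\<forall>i j. 1 \<le> i \<and> i \<le> s \<and> j < i \<longrightarrow> \<beta> i j \<ge> 0) \<and> (\<forall>i j. 1 \<le> i \<and> i \<le> s \<and> j < i \<and> \<beta> i j > 0 \<longrightarrow> \<tau> \<le> (\<alpha> i j / \<beta> i j) * \<omega>p)"
              then show ?thesis using nall by simp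
            next
              assume "(\<exists>i j. 1 \<le> i \<and> i \<le> s \<and> j < i \<and> \<beta> i j < 0) \<and> (\<forall>i j. 1 \<le> i \<and> i \<le> s \<and> j < i \<and> \<beta> i j \<noteq> 0 \<longrightarrow>
              \<tau> \<le> (\<alpha> i j / \<bar>\<beta> i j\<bar>) * min \<omega>p \<omega>m)"
              then show ?thesis by (rule conjunct2)
            qed
            consider (bl) "\<beta> i j < 0" | (be) "\<beta> i j = 0" | (bg) "\<beta> i j > 0" by linarith
            then show ?thesis
            proof cases
              case bl
              have nall: "\<not> (\<forall>i j. 1 \<le> i \<and> i \<le> s \<and> j < i \<longrightarrow> \<beta> i j \<ge> 0)"
              proof
                assume A: "\<forall>i j. 1 \<le> i \<and> i \<le> s \<and> j < i \<longrightarrow> \<beta> i j \<ge> 0"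
                have "\<beta> i j \<ge> 0" using A i1 hs j by blast
                then show False using bl by simp
              qed
              have t1: "\<tau> \<le> (\<alpha> i j / \<bar>\<beta> i j\<bar>) * min \<omega>p \<omega>m"
                using G2[OF nall, rule_format, of i j] i1 hs j bl by linarith
              have "(\<alpha> i j / \<bar>\<beta> i j\<bar>) * min \<omega>p \<omega>m \<le> (\<alpha> i j / \<bar>\<beta> i j\<bar>) * \<omega>m"
                by (intro mult_left_mono) (use a0 in auto)
              with t1 have "\<tau> \<le> (\<alpha> i j / \<bar>\<beta> i j\<bar>) * \<omega>m" by linarith
              then have le: "\<tau> * \<bar>\<beta> i j\<bar> / \<alpha> i j \<le> \<omega>m"
                using ap bl by (auto simp: field_simps)
              have pos: "0 < \<tau> * \<bar>\<beta> i j\<bar> / \<alpha> i j"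
                using ap bl tau_pos by (intro divide_pos_pos mult_pos_pos) auto
              have "\<bar>\<xi> - (\<tau> * \<bar>\<beta> i j\<bar> / \<alpha> i j) * f \<xi>\<bar> \<le> \<rho>"
                using Fminus(2)[OF xi pos le] .
              moreover have "\<tau> * \<bar>\<beta> i j\<bar> / \<alpha> i j = - (\<tau> * \<beta> i j / \<alpha> i j)"
                using bl by simp
              ultimately show ?thesis by simp
            next
              case be then show ?thesis using xi by simp
            next
              case bg
              have "\<tau> \<le> (\<alpha> i j / \<beta> i j) * \<omega>p"
              proof (cases "\<forall>i j. 1 \<le> i \<and> i \<le> s \<and> j < i \<longrightarrow> \<beta> i j \<ge> 0")
                case True
                then have "\<forall>i j. 1 \<le> i \<and> i \<le> s \<and> j < i \<and> \<beta> i j > 0 \<longrightarrow> \<tau> \<le> (\<alpha> i j / \<beta> i j) * \<omega>p"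
                  using step_restr
                proof (elim disjE)
                  assume "(\<forall>i j. 1 \<le> i \<and> i \<le> s \<and> j < i \<longrightarrow> \<beta> i j \<ge> 0) \<and> (\<forall>i j. 1 \<le> i \<and> i \<le> s \<and> j < i \<and> \<beta> i j > 0 \<longrightarrow> \<tau> \<le> (\<alpha> i j / \<beta> i j) * \<omega>p)"
                  then show ?thesis by (rule conjunct2)
                next
                  assume "(\<exists>i j. 1 \<le> i \<and> i \<le> s \<and> j < i \<and> \<beta> i j < 0) \<and> (\<forall>i j. 1 \<le> i \<and> i \<le> s \<and> j < i \<and> \<beta> i j \<noteq> 0 \<longrightarrow>
              \<tau> \<le> (\<alpha> i j / \<bar>\<beta> i j\<bar>) * min \<omega>p \<omega>m)"
                  then obtain i' j' where "1 \<le> i' \<and> i' \<le> s \<and> j' < i' \<and> \<beta> i' j' < 0" by blast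
                  moreover have "\<beta> i' j' \<ge> 0" using True calculation by blast
                  ultimately show ?thesis by linarith
                qed
                then show ?thesis using i1 hs j bg by blast
              next
                case False
                have t1: "\<tau> \<le> (\<alpha> i j / \<bar>\<beta> i j\<bar>) * min \<omega>p \<omega>m"
                  using G2[OF False, rule_format, of i j] i1 hs j bg by linarith
                have "(\<alpha> i j / \<bar>\<beta> i j\<bar>) * min \<omega>p \<omega>m \<le> (\<alpha> i j / \<bar>\<beta> i j\<bar>) * \<omega>p"
                  by (intro mult_left_mono) (use a0 in auto)
                with t1 bg show ?thesis by simp
              qed
              then have le: "\<tau> * \<beta> i j / \<alpha> i j \<le> \<omega>p"
                using ap bg by (auto simp: field_simps)
              have pos: "0 < \<tau> * \<beta> i j / \<alpha> i j"
                using ap bg tau_pos by (intro divide_pos_pos mult_pos_pos) auto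
              show ?thesis using Fplus(2)[OF xi pos le] by simp
            qed
          qed
          then show ?thesis unfolding wexp using ap
            by (simp add: abs_mult mult_left_mono)
        qed
        have cij: "c j \<le> c i"
        proof -
          have "\<forall>d. j + d \<le> s \<longrightarrow> c j \<le> c (j + d)"
          proof
            fix d show "j + d \<le> s \<longrightarrow> c j \<le> c (j + d)"
              proof (induction d)
              case (Suc d)
              then show ?case using c_mono[of "j + d"] by force
            qed simp
          qed
          then show ?thesis using j less.prems by (metis le_add_diff_inverse less_imp_le)
        qed
        show ?thesis
        proof (cases "c i = c j")
          case True
          then show ?thesis using wk by (simp add: w_def[symmetric] mat_exp_zero)
        next
          case False
          then have om: "(c i - c j) * \<tau> > 0" using cij tau_pos by simp
          show ?thesis
          proof (cases "\<alpha> i j = 0")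
            case True
            then have "\<beta> i j = 0" using beta_zero[OF i1 less.prems j] by simp
            then show ?thesis using True by simp
          next
            case False
            then have ap: "\<alpha> i j * \<rho> > 0" using a0 rho_pos by simp
            have "vnorm_inf (mat_exp (((c i - c j) * \<tau>) *\<^sub>R L) *v w) \<le> \<alpha> i j * \<rho>"
              by (rule contr[OF L_contr[OF om] _ ap]) (simp add: vnorm_le_iff wk)
            then show ?thesis by (simp add: vnorm_le_iff w_def)
          qed
        qed
      qed
      show ?thesis
      proof
        fix k
        have "\<bar>u i $ k\<bar> = \<bar>\<Sum>j<i. (mat_exp (((c i - c j) * \<tau>) *\<^sub>R L)
                 *v (\<alpha> i j *\<^sub>R u j + (\<tau> * \<beta> i j) *\<^sub>R fvec f (u j))) $ k\<bar>"
          using stages[OF i1 less.prems] by (simp add: sum_component)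
        also have "\<dots> \<le> (\<Sum>j<i. \<bar>(mat_exp (((c i - c j) * \<tau>) *\<^sub>R L)
                 *v (\<alpha> i j *\<^sub>R u j + (\<tau> * \<beta> i j) *\<^sub>R fvec f (u j))) $ k\<bar>)"
          by (rule sum_abs)
        also have "\<dots> \<le> (\<Sum>j<i. \<alpha> i j * \<rho>)"
          by (intro sum_mono comp) simp
        also have "\<dots> = \<rho>" using alpha_sum[OF i1 less.prems]
          by (simp add: sum_distrib_right[symmetric])
        finally show "\<bar>u i $ k\<bar> \<le> \<rho>" .
      qed
    qed
  qed
  then show ?thesis by (simp add: vnorm_le_iff)
qed

end
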